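(* Suppose $N$ carries a $B$-grading and a $B'$-grading such that the $B'$-grading refines the $B$-grading, and suppose $M$ is a $B$-graded submodule of $N$, i.e. $M=\bigoplus_{b\in B}(M\cap N_b)$. Then every element of every reduced Macaulay basis of $M$ with respect to the $B'$-grading is $B$-homogeneous.
   Context: Standing setup. $\mathbf{k}$ is a field. $(A,+,0)$ is a finitely generated cancellative commutative monoid with a well-ordered total order such that $0<a$ for $a\ne0$ and $a\le a'\Rightarrow a+c\le a'+c$. $R=\bigoplus_{a\in A}R_a$ is a commutative Noetherian $\mathbf{k}$-algebra with $R_aR_{a'}\subseteq R_{a+a'}$. $B$ and $B'$ are well-ordered totally ordered sets, each with an action $(a,b)\mapsto a\cdot b$ of $A$ satisfying $0\cdot b=b$, $(a+a')\cdot b=a\cdot(a'\cdot b)$, monotone and cancellative in each argument. $N$ is a Noetherian $R$-module with gradings $N=\bigoplus_{b\in B}N_b=\bigoplus_{b'\in B'}N'_{b'}$, $R_aN_b\subseteq N_{a\cdot b}$, $R_aN'_{b'}\subseteq N'_{a\cdot b'}$; $M\subseteq N$ an $R$-submodule. The $B'$-grading refines the $B$-grading if there is an order-preserving map $g:B'\to B$ with $g(a\cdot b')=a\cdot g(b')$ and $N_b=\bigoplus_{b'\in g^{-1}(b)}N'_{b'}$ for all $b$. For a nonzero $m$, $\deg m$, $\operatorname{lf}(m)$ (w.r.t. a chosen grading) are the largest degree of a nonzero homogeneous component and that component. A finite set $X$ of nonzero elements of $M$ is a Macaulay basis of $M$ w.r.t. a grading if the $R$-submodule generated by $\{\operatorname{lf}(p):0\ne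 p\in M\}$ equals that generated by $\{\operatorname{lf}(x):x\in X\}$. Reduction (w.r.t. the $B'$-grading): $W_{b'}(X)=\operatorname{span}_{\mathbf{k}}\{r\operatorname{lf}(x): x\in X,\ r\in R\text{ homogeneous},\ r\operatorname{lf}(x)\in N'_{b'}\}$; $m\to_X m'$ iff $\{b': m_{b'}\ne0,\ m_{b'}\in W_{b'}(X)\}$ is nonempty with maximum $b'$ and $m'=m-\sum_jr_jx_j$ with $x_j\in X$, $r_j$ homogeneous, $r_j\operatorname{lf}(x_j)\in N'_{b'}$, $m_{b'}=\sum_jr_j\operatorname{lf}(x_j)$. A reduced Macaulay basis is a Macaulay basis $X$ such that for each $x\in X$ there is no $m'$ with $x\to_{X\setminus\{x\}}m'$. *)

theory Defs
  imports Main
begin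

definition direct_sum_decomp :: "('i \<Rightarrow> 'x::ab_group_add set) \<Rightarrow> bool" where
  "direct_sum_decomp D \<longleftrightarrow>
     (\<forall>i. 0 \<in> D i \<and> (\<forall>x\<in>D i. \<forall>y\<in>D i. x + y \<in> D i \<and> - x \<in> D i)) \<and>
     (\<forall>x. \<exists>!f. finite {i. f i \<noteq> 0} \<and> (\<forall>i. f i \<in> D i) \<and> sum f {i. f i \<noteq> 0} = x)"

definition comp :: "('i \<Rightarrow> 'x::ab_group_add set) \<Rightarrow> 'i \<Rightarrow> 'x \<Rightarrow> 'x" where
  "comp D i x = (THE f. finite {j. f j \<noteq> 0} \<and> (\<forall>j. f j \<in> D j) \<and> sum f {j. f j \<noteq> 0} = x) i"

definition gdeg :: "('i::linorder \<Rightarrow> 'x::ab_group_add set) \<Rightarrow> 'x \<Rightarrow> 'i" where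
  "gdeg D x = Max {i. comp D i x \<noteq> 0}"

definition lf :: "('i::linorder \<Rightarrow> 'x::ab_group_add set) \<Rightarrow> 'x \<Rightarrow> 'x" where
  "lf D x = comp D (gdeg D x) x"

definition homogeneous :: "('i \<Rightarrow> 'x set) \<Rightarrow> 'x \<Rightarrow> bool" where
  "homogeneous D x \<longleftrightarrow> (\<exists>i. x \<in> D i)"

definition fin_gen_monoid :: "'a::comm_monoid_add itself \<Rightarrow> bool" where
  "fin_gen_monoid _ \<longleftrightarrow> (\<exists>G::'a set. finite G \<and> (\<forall>a. \<exists>xs. set xs \<subseteq> G \<and> a = sum_list xs))"

definition graded_monoid_ok :: "'a::{comm_monoid_add,wellorder} itself \<Rightarrow> bool" where
  "graded_monoid_ok T \<longleftrightarrow> fin_gen_monoid T \<and>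
     (\<forall>a b c::'a. a + c = b + c \<longrightarrow> a = b) \<and>
     (\<forall>a::'a. a \<noteq> 0 \<longrightarrow> 0 < a) \<and>
     (\<forall>a a' c::'a. a \<le> a' \<longrightarrow> a + c \<le> a' + c)"

definition monoid_action :: "('a::{comm_monoid_add,wellorder} \<Rightarrow> 'b::wellorder \<Rightarrow> 'b) \<Rightarrow> bool" where
  "monoid_action act \<longleftrightarrow>
     (\<forall>b. act 0 b = b) \<and>
     (\<forall>a a' b. act (a + a') b = act a (act a' b)) \<and>
     (\<forall>a a' b. a \<le> a' \<longrightarrow> act a b \<le> act a' b) \<and>
     (\<forall>a b b'. b \<le> b' \<longrightarrow> act a b \<le> act a b') \<and>
     (\<forall>a a' b. act a b = act a' b \<longrightarrow> a = a') \<and>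
     (\<forall>a b b'. act a b = act a b' \<longrightarrow> b = b')"

text \<open>A k-algebra structure on a commutative ring: a ring homomorphism from the field k.\<close>
definition alg_hom :: "('k::field \<Rightarrow> 'r::comm_ring_1) \<Rightarrow> bool" where
  "alg_hom \<phi> \<longleftrightarrow> \<phi> 1 = 1 \<and> (\<forall>x y. \<phi> (x + y) = \<phi> x + \<phi> y) \<and> (\<forall>x y. \<phi> (x * y) = \<phi> x * \<phi> y)"

definition is_ideal :: "'r::comm_ring_1 set \<Rightarrow> bool" where
  "is_ideal I \<longleftrightarrow> 0 \<in> I \<and> (\<forall>x\<in>I. \<forall>y\<in>I. x + y \<in> I) \<and> (\<forall>r. \<forall>x\<in>I. r * x \<in> I)"

definition gen_ideal :: "'r::comm_ring_1 set \<Rightarrow> 'r set" where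
  "gen_ideal S = \<Inter>{I. is_ideal I \<and> S \<subseteq> I}"

definition noetherian_ring :: "'r::comm_ring_1 itself \<Rightarrow> bool" where
  "noetherian_ring _ \<longleftrightarrow> (\<forall>I::'r set. is_ideal I \<longrightarrow> (\<exists>F. finite F \<and> F \<subseteq> I \<and> I = gen_ideal F))"

definition is_module :: "('r::comm_ring_1 \<Rightarrow> 'n::ab_group_add \<Rightarrow> 'n) \<Rightarrow> bool" where
  "is_module sm \<longleftrightarrow> (\<forall>r x y. sm r (x + y) = sm r x + sm r y) \<and>
     (\<forall>r s x. sm (r + s) x = sm r x + sm s x) \<and>
     (\<forall>r s x. sm (r * s) x = sm r (sm s x)) \<and> (\<forall>x. sm 1 x = x)"

definition is_submodule :: "('r::comm_ring_1 \<Rightarrow> 'n::ab_group_add \<Rightarrow> 'n) \<Rightarrow> 'n set \<Rightarrow> bool" where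
  "is_submodule sm S \<longleftrightarrow> 0 \<in> S \<and> (\<forall>x\<in>S. \<forall>y\<in>S. x + y \<in> S) \<and> (\<forall>r. \<forall>x\<in>S. sm r x \<in> S)"

definition gen_submodule :: "('r::comm_ring_1 \<Rightarrow> 'n::ab_group_add \<Rightarrow> 'n) \<Rightarrow> 'n set \<Rightarrow> 'n set" where
  "gen_submodule sm S = \<Inter>{T. is_submodule sm T \<and> S \<subseteq> T}"

definition noetherian_module :: "('r::comm_ring_1 \<Rightarrow> 'n::ab_group_add \<Rightarrow> 'n) \<Rightarrow> bool" where
  "noetherian_module sm \<longleftrightarrow>
     (\<forall>T. is_submodule sm T \<longrightarrow> (\<exists>F. finite F \<and> F \<subseteq> T \<and> T = gen_submodule sm F))"

definition graded_algebra ::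
  "('k::field \<Rightarrow> 'r::comm_ring_1) \<Rightarrow> ('a::comm_monoid_add \<Rightarrow> 'r set) \<Rightarrow> bool" where
  "graded_algebra \<phi> Rg \<longleftrightarrow> direct_sum_decomp Rg \<and>
     (\<forall>a c r. r \<in> Rg a \<longrightarrow> \<phi> c * r \<in> Rg a) \<and>
     (\<forall>a a' r s. r \<in> Rg a \<longrightarrow> s \<in> Rg a' \<longrightarrow> r * s \<in> Rg (a + a'))"

definition graded_module ::
  "('k::field \<Rightarrow> 'r::comm_ring_1) \<Rightarrow> ('a \<Rightarrow> 'r set) \<Rightarrow> ('r \<Rightarrow> 'n::ab_group_add \<Rightarrow> 'n)
     \<Rightarrow> ('a \<Rightarrow> 'b \<Rightarrow> 'b) \<Rightarrow> ('b \<Rightarrow> 'n set) \<Rightarrow> bool" where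
  "graded_module \<phi> Rg sm act Ng \<longleftrightarrow> direct_sum_decomp Ng \<and>
     (\<forall>b c x. x \<in> Ng b \<longrightarrow> sm (\<phi> c) x \<in> Ng b) \<and>
     (\<forall>a b r x. r \<in> Rg a \<longrightarrow> x \<in> Ng b \<longrightarrow> sm r x \<in> Ng (act a b))"

definition refines ::
  "('a \<Rightarrow> 'b::order \<Rightarrow> 'b) \<Rightarrow> ('a \<Rightarrow> 'c::order \<Rightarrow> 'c) \<Rightarrow> ('b \<Rightarrow> 'n::ab_group_add set)
     \<Rightarrow> ('c \<Rightarrow> 'n set) \<Rightarrow> bool" where
  "refines act act' Ng Ng' \<longleftrightarrow> (\<exists>g :: 'c \<Rightarrow> 'b. mono g \<and>
     (\<forall>a c. g (act' a c) = act a (g c)) \<and>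
     (\<forall>b. Ng b = {x. \<exists>S f. finite S \<and> S \<subseteq> g -` {b} \<and> (\<forall>c\<in>S. f c \<in> Ng' c) \<and> x = sum f S}))"

definition graded_submodule :: "('b \<Rightarrow> 'n::ab_group_add set) \<Rightarrow> 'n set \<Rightarrow> bool" where
  "graded_submodule Ng M \<longleftrightarrow>
     (\<forall>m\<in>M. \<exists>S f. finite S \<and> (\<forall>b\<in>S. f b \<in> M \<inter> Ng b) \<and> m = sum f S)"

definition macaulay_basis ::
  "('r::comm_ring_1 \<Rightarrow> 'n::ab_group_add \<Rightarrow> 'n) \<Rightarrow> ('c::linorder \<Rightarrow> 'n set) \<Rightarrow> 'n set \<Rightarrow> 'n set \<Rightarrow> bool" where
  "macaulay_basis sm Ng' M X \<longleftrightarrow> finite X \<and> X \<subseteq> M - {0} \<and>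
     gen_submodule sm {lf Ng' p | p. p \<in> M \<and> p \<noteq> 0} = gen_submodule sm (lf Ng' ` X)"

definition kspan :: "('k::field \<Rightarrow> 'r::comm_ring_1) \<Rightarrow> ('r \<Rightarrow> 'n::ab_group_add \<Rightarrow> 'n) \<Rightarrow> 'n set \<Rightarrow> 'n set" where
  "kspan \<phi> sm S = {v. \<exists>F c. finite F \<and> F \<subseteq> S \<and> v = (\<Sum>w\<in>F. sm (\<phi> (c w)) w)}"

definition Wset ::
  "('k::field \<Rightarrow> 'r::comm_ring_1) \<Rightarrow> ('a \<Rightarrow> 'r set) \<Rightarrow> ('r \<Rightarrow> 'n::ab_group_add \<Rightarrow> 'n)
     \<Rightarrow> ('c::linorder \<Rightarrow> 'n set) \<Rightarrow> 'n set \<Rightarrow> 'c \<Rightarrow> 'n set" where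
  "Wset \<phi> Rg sm Ng' X c = kspan \<phi> sm
     {sm r (lf Ng' x) | r x. x \<in> X \<and> homogeneous Rg r \<and> sm r (lf Ng' x) \<in> Ng' c}"

definition reduces ::
  "('k::field \<Rightarrow> 'r::comm_ring_1) \<Rightarrow> ('a \<Rightarrow> 'r set) \<Rightarrow> ('r \<Rightarrow> 'n::ab_group_add \<Rightarrow> 'n)
     \<Rightarrow> ('c::linorder \<Rightarrow> 'n set) \<Rightarrow> 'n set \<Rightarrow> 'n \<Rightarrow> 'n \<Rightarrow> bool" where
  "reduces \<phi> Rg sm Ng' X m m' \<longleftrightarrow>
     (let D = {c. comp Ng' c m \<noteq> 0 \<and> comp Ng' c m \<in> Wset \<phi> Rg sm Ng' X c} in
      \<exists>c. c \<in> D \<and> (\<forall>d\<in>D. d \<le> c) \<and>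
        (\<exists>ps :: ('r \<times> 'n) list.
           (\<forall>(r, x) \<in> set ps. x \<in> X \<and> homogeneous Rg r \<and> sm r (lf Ng' x) \<in> Ng' c) \<and>
           comp Ng' c m = sum_list (map (\<lambda>(r, x). sm r (lf Ng' x)) ps) \<and>
           m' = m - sum_list (map (\<lambda>(r, x). sm r x) ps)))"

definition reduced_macaulay_basis ::
  "('k::field \<Rightarrow> 'r::comm_ring_1) \<Rightarrow> ('a \<Rightarrow> 'r set) \<Rightarrow> ('r \<Rightarrow> 'n::ab_group_add \<Rightarrow> 'n)
     \<Rightarrow> ('c::linorder \<Rightarrow> 'n set) \<Rightarrow> 'n set \<Rightarrow> 'n set \<Rightarrow> bool" where
  "reduced_macaulay_basis \<phi> Rg sm Ng' M X \<longleftrightarrow> macaulay_basis sm Ng' M X \<and>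
     (\<forall>x\<in>X. \<not> (\<exists>m'. reduces \<phi> Rg sm Ng' (X - {x}) x m'))"

end

theory Submission
  imports Defs
begin


lemma ds_ex: "direct_sum_decomp D \<Longrightarrow> \<exists>!f. finite {j. f j \<noteq> 0} \<and> (\<forall>j. f j \<in> D j) \<and> sum f {j. f j \<noteq> 0} = x"
  unfolding direct_sum_decomp_def by blast

lemma comp_props:
  assumes "direct_sum_decomp D"
  shows "finite {i. comp D i x \<noteq> 0}" "comp D i x \<in> D i"
    "sum (\<lambda>i. comp D i x) {i. comp D i x \<noteq> 0} = x"
proof -
  let ?P = "\<lambda>f. finite {j. f j \<noteq> 0} \<and> (\<forall>j. f j \<in> D j) \<and> sum f {j. f j \<noteq> 0} = x"
  have "?P (THE f. ?P f)" by (rule theI'[OF ds_ex[OF assms]])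
  moreover have "(\<lambda>i. comp D i x) = (THE f. ?P f)" unfolding comp_def by (rule ext) simp
  ultimately show "finite {i. comp D i x \<noteq> 0}" "comp D i x \<in> D i"
    "sum (\<lambda>i. comp D i x) {i. comp D i x \<noteq> 0} = x" by metis+
qed

lemma comp_unique:
  assumes "direct_sum_decomp D" "finite {j. f j \<noteq> 0}" "\<forall>j. f j \<in> D j" "sum f {j. f j \<noteq> 0} = x"
  shows "comp D i x = f i"
proof -
  let ?P = "\<lambda>f. finite {j. f j \<noteq> 0} \<and> (\<forall>j. f j \<in> D j) \<and> sum f {j. f j \<noteq> 0} = x"
  have "(THE f. ?P f) = f" by (rule the1_equality[OF ds_ex[OF assms(1)]]) (use assms in blast)
  thus ?thesis unfolding comp_def by simp
qed

lemma ds_zero: "direct_sum_decomp D \<Longrightarrow> 0 \<in> D i"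
  unfolding direct_sum_decomp_def by blast
lemma ds_add: "direct_sum_decomp D \<Longrightarrow> x \<in> D i \<Longrightarrow> y \<in> D i \<Longrightarrow> x + y \<in> D i"
  unfolding direct_sum_decomp_def by blast
lemma ds_sum: "direct_sum_decomp D \<Longrightarrow> (\<forall>j\<in>I. h j \<in> D i) \<Longrightarrow> sum h I \<in> D i"
proof (induction I rule: infinite_finite_induct)
  case (infinite A) then show ?case by (simp add: ds_zero)
next
  case empty then show ?case by (simp add: ds_zero)
next
  case (insert x F) then show ?case by (simp add: ds_add)
qed

lemma comp_hom:
  assumes "direct_sum_decomp D" "y \<in> D d"
  shows "comp D c y = (if c = d then y else 0)"
proof -
  let ?f = "\<lambda>c. if c = d then y else 0"
  have "finite {j. ?f j \<noteq> 0}" by (rule finite_subset[of _ "{d}"]) auto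
  moreover have "\<forall>j. ?f j \<in> D j" using assms by (simp add: ds_zero)
  moreover have "sum ?f {j. ?f j \<noteq> 0} = y"
  proof (cases "y = 0")
    case True then show ?thesis by simp
  next
    case False then have "{j. ?f j \<noteq> 0} = {d}" by auto
    then show ?thesis by simp
  qed
  ultimately show ?thesis by (rule comp_unique[OF assms(1)])
qed

lemma comp_zero: "direct_sum_decomp D \<Longrightarrow> comp D c 0 = 0"
proof -
  assume ds: "direct_sum_decomp D"
  have "0 \<in> D c" by (rule ds_zero[OF ds])
  from comp_hom[OF ds this, of c] show ?thesis by simp
qed

lemma comp_add:
  assumes ds: "direct_sum_decomp D"
  shows "comp D c (x + y) = comp D c x + comp D c y"
proof -
  let ?f = "\<lambda>i. comp D i x + comp D i y"
  let ?Sx = "{i. comp D i x \<noteq> 0}" let ?Sy = "{i. comp D i y \<noteq> 0}"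
  have fx: "finite ?Sx" "finite ?Sy" using comp_props(1)[OF ds] by auto
  have sub: "{j. ?f j \<noteq> 0} \<subseteq> ?Sx \<union> ?Sy" by auto
  have "finite {j. ?f j \<noteq> 0}" using sub fx by (meson finite_Un finite_subset)
  moreover have "\<forall>j. ?f j \<in> D j" using ds by (simp add: comp_props(2) ds_add)
  moreover have "sum ?f {j. ?f j \<noteq> 0} = x + y"
  proof -
    have "sum ?f {j. ?f j \<noteq> 0} = sum ?f (?Sx \<union> ?Sy)"
      by (rule sum.mono_neutral_left) (use fx sub in auto)
    also have "\<dots> = sum (\<lambda>i. comp D i x) (?Sx \<union> ?Sy) + sum (\<lambda>i. comp D i y) (?Sx \<union> ?Sy)"
      by (simp add: sum.distrib)
    also have "sum (\<lambda>i. comp D i x) (?Sx \<union> ?Sy) = sum (\<lambda>i. comp D i x) ?Sx"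
      by (rule sum.mono_neutral_right) (use fx in auto)
    also have "sum (\<lambda>i. comp D i y) (?Sx \<union> ?Sy) = sum (\<lambda>i. comp D i y) ?Sy"
      by (rule sum.mono_neutral_right) (use fx in auto)
    finally show ?thesis using comp_props(3)[OF ds] by simp
  qed
  ultimately show ?thesis by (rule comp_unique[OF ds])
qed

lemma comp_sum:
  assumes ds: "direct_sum_decomp D"
  shows "comp D c (sum h I) = (\<Sum>i\<in>I. comp D c (h i))"
proof (induction I rule: infinite_finite_induct)
  case (infinite A) then show ?case by (simp add: comp_zero[OF ds])
next
  case empty then show ?case by (simp add: comp_zero[OF ds])
next
  case (insert x F) then show ?case by (simp add: comp_add[OF ds])
qed

lemma comp_decomp:
  assumes ds: "direct_sum_decomp D"
  shows "x = (\<Sum>i\<in>{i. comp D i x \<noteq> 0}. comp D i x)"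
  using comp_props(3)[OF ds] by simp

lemma supp_nonempty:
  assumes ds: "direct_sum_decomp D" "x \<noteq> 0"
  shows "{i. comp D i x \<noteq> 0} \<noteq> {}"
proof
  assume "{i. comp D i x \<noteq> 0} = {}"
  then have "sum (\<lambda>i. comp D i x) {i. comp D i x \<noteq> 0} = 0" by (metis sum.empty)
  then show False using comp_props(3)[OF ds(1), of x] ds(2) by simp
qed

lemma lf_props:
  assumes ds: "direct_sum_decomp (D::'i::linorder \<Rightarrow> 'x::ab_group_add set)" and "x \<noteq> 0"
  shows "lf D x \<noteq> 0" "lf D x \<in> D (gdeg D x)" "comp D i x \<noteq> 0 \<Longrightarrow> i \<le> gdeg D x"
    "comp D (gdeg D x) x = lf D x"
proof -
  have f: "finite {i. comp D i x \<noteq> 0}" using comp_props(1)[OF ds] .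
  have ne: "{i. comp D i x \<noteq> 0} \<noteq> {}" using supp_nonempty[OF assms] .
  show "lf D x \<noteq> 0" unfolding lf_def gdeg_def using Max_in[OF f ne] by simp
  show "lf D x \<in> D (gdeg D x)" unfolding lf_def by (rule comp_props(2)[OF ds])
  show "comp D i x \<noteq> 0 \<Longrightarrow> i \<le> gdeg D x" unfolding gdeg_def using Max_ge[OF f] by simp
  show "comp D (gdeg D x) x = lf D x" unfolding lf_def ..
qed



locale L =
  fixes \<phi> :: "'k::field \<Rightarrow> 'r::comm_ring_1"
    and Rg :: "'a::{comm_monoid_add,wellorder} \<Rightarrow> 'r set"
    and sm :: "'r \<Rightarrow> 'n::ab_group_add \<Rightarrow> 'n"
    and act' :: "'a \<Rightarrow> 'c::wellorder \<Rightarrow> 'c"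
    and Ng' :: "'c \<Rightarrow> 'n set"
  assumes alg: "alg_hom \<phi>" and ga: "graded_algebra \<phi> Rg" and md: "is_module sm"
    and gm: "graded_module \<phi> Rg sm act' Ng'"
begin

lemma phi_add: "\<phi> (x + y) = \<phi> x + \<phi> y" using alg unfolding alg_hom_def by blast
lemma phi_mult: "\<phi> (x * y) = \<phi> x * \<phi> y" using alg unfolding alg_hom_def by blast
lemma phi1: "\<phi> 1 = 1" using alg unfolding alg_hom_def by blast
lemma phi0: "\<phi> 0 = 0" using phi_add[of 0 0] by simp

lemma sm_add_v: "sm r (x + y) = sm r x + sm r y" using md unfolding is_module_def by blast
lemma sm_add_r: "sm (r + s) x = sm r x + sm s x" using md unfolding is_module_def by blast
lemma sm_mult: "sm (r * s) x = sm r (sm s x)" using md unfolding is_module_def by blast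
lemma sm_one: "sm 1 x = x" using md unfolding is_module_def by blast
lemma sm_r0: "sm r 0 = 0" using sm_add_v[of r 0 0] by simp
lemma sm_0r: "sm 0 x = 0" using sm_add_r[of 0 0 x] by simp
lemma sm_comm: "sm r (sm s x) = sm s (sm r x)" by (metis sm_mult mult.commute)

lemma sm_sum_v: "sm r (sum h I) = (\<Sum>i\<in>I. sm r (h i))"
  by (induction I rule: infinite_finite_induct) (auto simp: sm_r0 sm_add_v)
lemma sm_sum_r: "sm (sum h I) x = (\<Sum>i\<in>I. sm (h i) x)"
  by (induction I rule: infinite_finite_induct) (auto simp: sm_0r sm_add_r)

lemma dsR: "direct_sum_decomp Rg" using ga unfolding graded_algebra_def by blast
lemma dsN: "direct_sum_decomp Ng'" using gm unfolding graded_module_def by blast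
lemma gm_act: "r \<in> Rg a \<Longrightarrow> x \<in> Ng' b \<Longrightarrow> sm r x \<in> Ng' (act' a b)"
  using gm unfolding graded_module_def by blast
lemma gm_phi: "x \<in> Ng' b \<Longrightarrow> sm (\<phi> c) x \<in> Ng' b"
  using gm unfolding graded_module_def by blast
lemma ga_mult: "r \<in> Rg a \<Longrightarrow> s \<in> Rg a' \<Longrightarrow> r * s \<in> Rg (a + a')"
  using ga unfolding graded_algebra_def by blast
lemma ga_phi: "r \<in> Rg a \<Longrightarrow> \<phi> c * r \<in> Rg a"
  using ga unfolding graded_algebra_def by blast

lemma kspan_0: "0 \<in> kspan \<phi> sm S"
  unfolding kspan_def by (rule CollectI, rule exI[of _ "{}"]) simp

lemma kspan_gen: "w \<in> S \<Longrightarrow> sm (\<phi> k) w \<in> kspan \<phi> sm S"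
  unfolding kspan_def by (rule CollectI, rule exI[of _ "{w}"], rule exI[of _ "\<lambda>_. k"]) simp

lemma kspan_add:
  assumes "u \<in> kspan \<phi> sm S" "v \<in> kspan \<phi> sm S"
  shows "u + v \<in> kspan \<phi> sm S"
proof -
  obtain F1 c1 where F1: "finite F1" "F1 \<subseteq> S" "u = (\<Sum>w\<in>F1. sm (\<phi> (c1 w)) w)"
    using assms(1) unfolding kspan_def by (auto simp only: mem_Collect_eq)
  obtain F2 c2 where F2: "finite F2" "F2 \<subseteq> S" "v = (\<Sum>w\<in>F2. sm (\<phi> (c2 w)) w)"
    using assms(2) unfolding kspan_def by (auto simp only: mem_Collect_eq)
  define c where "c w = (if w \<in> F1 then c1 w else 0) + (if w \<in> F2 then c2 w else 0)" for w
  have fU: "finite (F1 \<union> F2)" using F1(1) F2(1) by simp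
  have pt: "sm (\<phi> (c w)) w = (if w \<in> F1 then sm (\<phi> (c1 w)) w else 0) + (if w \<in> F2 then sm (\<phi> (c2 w)) w else 0)" for w
    unfolding c_def phi_add sm_add_r by (simp add: phi0 sm_0r)
  have "(\<Sum>w\<in>F1 \<union> F2. sm (\<phi> (c w)) w) =
     (\<Sum>w\<in>F1 \<union> F2. (if w \<in> F1 then sm (\<phi> (c1 w)) w else 0)) +
     (\<Sum>w\<in>F1 \<union> F2. (if w \<in> F2 then sm (\<phi> (c2 w)) w else 0))"
    unfolding pt by (rule sum.distrib)
  also have "(\<Sum>w\<in>F1 \<union> F2. (if w \<in> F1 then sm (\<phi> (c1 w)) w else 0)) = u"
    unfolding F1(3) sum.inter_restrict[OF fU, symmetric] by (simp add: Int_absorb1)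
  also have "(\<Sum>w\<in>F1 \<union> F2. (if w \<in> F2 then sm (\<phi> (c2 w)) w else 0)) = v"
    unfolding F2(3) sum.inter_restrict[OF fU, symmetric] by (simp add: Int_absorb1)
  finally have "(\<Sum>w\<in>F1 \<union> F2. sm (\<phi> (c w)) w) = u + v" .
  moreover have "finite (F1 \<union> F2)" "F1 \<union> F2 \<subseteq> S" using F1 F2 by auto
  ultimately show ?thesis unfolding kspan_def
    by (intro CollectI exI[of _ "F1 \<union> F2"] exI[of _ c]) simp
qed

lemma kspan_induct:
  assumes "v \<in> kspan \<phi> sm S" "P 0" "\<And>x y. P x \<Longrightarrow> P y \<Longrightarrow> P (x + y)"
    "\<And>k w. w \<in> S \<Longrightarrow> P (sm (\<phi> k) w)"
  shows "P v"
proof -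
  obtain F c where F: "finite F" "F \<subseteq> S" "v = (\<Sum>w\<in>F. sm (\<phi> (c w)) w)"
    using assms(1) unfolding kspan_def by (auto simp only: mem_Collect_eq)
  have "F \<subseteq> S \<Longrightarrow> P (\<Sum>w\<in>F. sm (\<phi> (c w)) w)" using F(1)
  proof (induction F rule: finite_induct)
    case empty then show ?case using assms(2) by simp
  next
    case (insert w F)
    then have "P (sm (\<phi> (c w)) w)" "P (\<Sum>w\<in>F. sm (\<phi> (c w)) w)" using assms(4) by auto
    from assms(3)[OF this] show ?case using insert(1,2) by simp
  qed
  then show ?thesis using F by simp
qed

lemma kspan_sum: "(\<forall>i\<in>I. h i \<in> kspan \<phi> sm S) \<Longrightarrow> sum h I \<in> kspan \<phi> sm S"
  by (induction I rule: infinite_finite_induct) (auto simp: kspan_0 kspan_add)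

abbreviation W where "W Y c \<equiv> Wset \<phi> Rg sm Ng' Y c"

lemma W_gen: "y \<in> Y \<Longrightarrow> r \<in> Rg a \<Longrightarrow> sm r (lf Ng' y) \<in> Ng' c \<Longrightarrow> sm r (lf Ng' y) \<in> W Y c"
proof -
  assume a: "y \<in> Y" "r \<in> Rg a" "sm r (lf Ng' y) \<in> Ng' c"
  have "sm r (lf Ng' y) \<in> {sm r (lf Ng' x) |r x. x \<in> Y \<and> homogeneous Rg r \<and> sm r (lf Ng' x) \<in> Ng' c}"
    using a unfolding homogeneous_def by blast
  from kspan_gen[OF this, of 1] show ?thesis unfolding Wset_def by (simp add: phi1 sm_one)
qed

lemma W_sm:
  assumes "r \<in> Rg a" "v \<in> W Y c"
  shows "sm r v \<in> W Y (act' a c)"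
  using assms(2) unfolding Wset_def
proof (rule kspan_induct)
  show "sm r 0 \<in> kspan \<phi> sm {sm ra (lf Ng' x) |ra x. x \<in> Y \<and> homogeneous Rg ra \<and> sm ra (lf Ng' x) \<in> Ng' (act' a c)}"
    by (simp add: sm_r0 kspan_0)
next
  fix x y
  assume "sm r x \<in> kspan \<phi> sm {sm ra (lf Ng' x) |ra x. x \<in> Y \<and> homogeneous Rg ra \<and> sm ra (lf Ng' x) \<in> Ng' (act' a c)}"
    "sm r y \<in> kspan \<phi> sm {sm ra (lf Ng' x) |ra x. x \<in> Y \<and> homogeneous Rg ra \<and> sm ra (lf Ng' x) \<in> Ng' (act' a c)}"
  then show "sm r (x + y) \<in> kspan \<phi> sm {sm ra (lf Ng' x) |ra x. x \<in> Y \<and> homogeneous Rg ra \<and> sm ra (lf Ng' x) \<in> Ng' (act' a c)}"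
    by (simp add: sm_add_v kspan_add)
next
  fix k w
  assume "w \<in> {sm r (lf Ng' x) |r x. x \<in> Y \<and> homogeneous Rg r \<and> sm r (lf Ng' x) \<in> Ng' c}"
  then obtain r0 y a0 where w: "w = sm r0 (lf Ng' y)" "y \<in> Y" "r0 \<in> Rg a0" "w \<in> Ng' c"
    unfolding homogeneous_def by blast
  have a1: "sm r (sm (\<phi> k) w) = sm (\<phi> k) (sm (r * r0) (lf Ng' y))"
    using w(1) by (simp add: sm_comm sm_mult)
  have a2: "r * r0 \<in> Rg (a + a0)" using ga_mult assms(1) w(3) .
  have a3: "sm (r * r0) (lf Ng' y) \<in> Ng' (act' a c)"
    using gm_act[OF assms(1) w(4)] w(1) by (simp add: sm_mult)
  show "sm r (sm (\<phi> k) w) \<in> kspan \<phi> sm {sm ra (lf Ng' x) |ra x. x \<in> Y \<and> homogeneous Rg ra \<and> sm ra (lf Ng' x) \<in> Ng' (act' a c)}"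
  proof -
    note a = a1 a2 a3
    have "sm (r * r0) (lf Ng' y) \<in> {sm ra (lf Ng' x) |ra x. x \<in> Y \<and> homogeneous Rg ra \<and> sm ra (lf Ng' x) \<in> Ng' (act' a c)}"
      using a(2,3) w(2) unfolding homogeneous_def by blast
    from kspan_gen[OF this, of k] show ?thesis unfolding a(1) .
  qed
qed

lemma W_0: "0 \<in> W Y c" unfolding Wset_def by (rule kspan_0)
lemma W_add: "u \<in> W Y c \<Longrightarrow> v \<in> W Y c \<Longrightarrow> u + v \<in> W Y c" unfolding Wset_def by (rule kspan_add)
lemma W_sum: "(\<forall>i\<in>I. h i \<in> W Y c) \<Longrightarrow> sum h I \<in> W Y c" unfolding Wset_def by (rule kspan_sum)

lemma W_ps:
  assumes "v \<in> W Y c"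
  shows "\<exists>ps :: ('r \<times> 'n) list.
           (\<forall>(r, x) \<in> set ps. x \<in> Y \<and> homogeneous Rg r \<and> sm r (lf Ng' x) \<in> Ng' c) \<and>
           v = sum_list (map (\<lambda>(r, x). sm r (lf Ng' x)) ps)"
  using assms unfolding Wset_def
proof (rule kspan_induct)
  show "\<exists>ps :: ('r \<times> 'n) list.
           (\<forall>(r, x) \<in> set ps. x \<in> Y \<and> homogeneous Rg r \<and> sm r (lf Ng' x) \<in> Ng' c) \<and>
           0 = sum_list (map (\<lambda>(r, x). sm r (lf Ng' x)) ps)"
    by (rule exI[of _ "[]"]) simp
next
  fix x y
  assume "\<exists>ps :: ('r \<times> 'n) list.
           (\<forall>(r, x) \<in> set ps. x \<in> Y \<and> homogeneous Rg r \<and> sm r (lf Ng' x) \<in> Ng' c) \<and>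
           x = sum_list (map (\<lambda>(r, x). sm r (lf Ng' x)) ps)"
   "\<exists>ps :: ('r \<times> 'n) list.
           (\<forall>(r, x) \<in> set ps. x \<in> Y \<and> homogeneous Rg r \<and> sm r (lf Ng' x) \<in> Ng' c) \<and>
           y = sum_list (map (\<lambda>(r, x). sm r (lf Ng' x)) ps)"
  then obtain p1 p2 :: "('r \<times> 'n) list" where
     "(\<forall>(r, x) \<in> set p1. x \<in> Y \<and> homogeneous Rg r \<and> sm r (lf Ng' x) \<in> Ng' c)"
     "x = sum_list (map (\<lambda>(r, x). sm r (lf Ng' x)) p1)"
     "(\<forall>(r, x) \<in> set p2. x \<in> Y \<and> homogeneous Rg r \<and> sm r (lf Ng' x) \<in> Ng' c)"
     "y = sum_list (map (\<lambda>(r, x). sm r (lf Ng' x)) p2)" by blast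
  then show "\<exists>ps :: ('r \<times> 'n) list.
           (\<forall>(r, x) \<in> set ps. x \<in> Y \<and> homogeneous Rg r \<and> sm r (lf Ng' x) \<in> Ng' c) \<and>
           x + y = sum_list (map (\<lambda>(r, x). sm r (lf Ng' x)) ps)"
    by (intro exI[of _ "p1 @ p2"]) auto
next
  fix k w
  assume "w \<in> {sm r (lf Ng' x) |r x. x \<in> Y \<and> homogeneous Rg r \<and> sm r (lf Ng' x) \<in> Ng' c}"
  then obtain r0 y a0 where w: "w = sm r0 (lf Ng' y)" "y \<in> Y" "r0 \<in> Rg a0" "w \<in> Ng' c"
    unfolding homogeneous_def by blast
  have e: "sm (\<phi> k) w = sm (\<phi> k * r0) (lf Ng' y)" using w(1) by (simp add: sm_mult)
  have h: "\<phi> k * r0 \<in> Rg a0" using ga_phi[OF w(3)] .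
  show "\<exists>ps :: ('r \<times> 'n) list.
           (\<forall>(r, x) \<in> set ps. x \<in> Y \<and> homogeneous Rg r \<and> sm r (lf Ng' x) \<in> Ng' c) \<and>
           sm (\<phi> k) w = sum_list (map (\<lambda>(r, x). sm r (lf Ng' x)) ps)"
  proof (rule exI[of _ "[(\<phi> k * r0, y)]"], intro conjI)
    have "sm (\<phi> k * r0) (lf Ng' y) \<in> Ng' c" unfolding e[symmetric] using gm_phi w(4) .
    then show "\<forall>(r, x) \<in> set [(\<phi> k * r0, y)]. x \<in> Y \<and> homogeneous Rg r \<and> sm r (lf Ng' x) \<in> Ng' c"
      using h w(2) unfolding homogeneous_def by auto
    show "sm (\<phi> k) w = sum_list (map (\<lambda>(r, x). sm r (lf Ng' x)) [(\<phi> k * r0, y)])"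
      using e by simp
  qed
qed

lemma comp_sm_hom:
  assumes "w \<in> Ng' c0"
  shows "comp Ng' c (sm r w) =
    (\<Sum>a\<in>{a. comp Rg a r \<noteq> 0}. (if act' a c0 = c then sm (comp Rg a r) w else 0))"
proof -
  have "sm r w = (\<Sum>a\<in>{a. comp Rg a r \<noteq> 0}. sm (comp Rg a r) w)"
    by (subst comp_decomp[OF dsR, of r]) (simp add: sm_sum_r)
  then have "comp Ng' c (sm r w) = (\<Sum>a\<in>{a. comp Rg a r \<noteq> 0}. comp Ng' c (sm (comp Rg a r) w))"
    by (simp add: comp_sum[OF dsN])
  also have "\<dots> = (\<Sum>a\<in>{a. comp Rg a r \<noteq> 0}. (if act' a c0 = c then sm (comp Rg a r) w else 0))"
    apply (rule sum.cong[OF refl])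
    using comp_hom[OF dsN gm_act[OF comp_props(2)[OF dsR] assms]] by simp
  finally show ?thesis .
qed

end


theorem mainTheorem16:
  fixes \<phi> :: "'k::field \<Rightarrow> 'r::comm_ring_1"
    and Rg :: "'a::{comm_monoid_add,wellorder} \<Rightarrow> 'r set"
    and sm :: "'r \<Rightarrow> 'n::ab_group_add \<Rightarrow> 'n"
    and act :: "'a \<Rightarrow> 'b::wellorder \<Rightarrow> 'b"
    and act' :: "'a \<Rightarrow> 'c::wellorder \<Rightarrow> 'c"
    and Ng :: "'b \<Rightarrow> 'n set"
    and Ng' :: "'c \<Rightarrow> 'n set"
    and M X :: "'n set"
  assumes "graded_monoid_ok TYPE('a)"
    and "alg_hom \<phi>"
    and "graded_algebra \<phi> Rg"
    and "noetherian_ring TYPE('r)"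
    and "monoid_action act"
    and "monoid_action act'"
    and "is_module sm"
    and "noetherian_module sm"
    and "graded_module \<phi> Rg sm act Ng"
    and "graded_module \<phi> Rg sm act' Ng'"
    and "refines act act' Ng Ng'"
    and "is_submodule sm M"
    and "graded_submodule Ng M"
    and "reduced_macaulay_basis \<phi> Rg sm Ng' M X"
  shows "\<forall>x\<in>X. homogeneous Ng x"
proof
  fix x assume xX: "x \<in> X"
  show "homogeneous Ng x"
  proof (rule ccontr)
  assume nh: "\<not> homogeneous Ng x"
  interpret L \<phi> Rg sm act' Ng' using assms by unfold_locales
  have dsB: "direct_sum_decomp Ng" using assms(9) unfolding graded_module_def by blast
  obtain g :: "'c \<Rightarrow> 'b" where g_mono: "mono g" and g_act: "\<And>a c. g (act' a c) = act a (g c)"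
    and g_Ng: "\<And>b. Ng b = {x. \<exists>S f. finite S \<and> S \<subseteq> g -` {b} \<and> (\<forall>c\<in>S. f c \<in> Ng' c) \<and> x = sum f S}"
    using assms(11) unfolding refines_def by blast
  have mb: "macaulay_basis sm Ng' M X"
    and red: "\<And>y. y \<in> X \<Longrightarrow> \<not> (\<exists>m'. reduces \<phi> Rg sm Ng' (X - {y}) y m')"
    using assms(14) unfolding reduced_macaulay_basis_def by blast+
  have xM: "x \<in> M" and x0: "x \<noteq> 0" using mb xX unfolding macaulay_basis_def by blast+
  have gen_eq: "gen_submodule sm {lf Ng' p | p. p \<in> M \<and> p \<noteq> 0} = gen_submodule sm (lf Ng' ` X)"
    using mb unfolding macaulay_basis_def by blast
  have act_ge: "b \<le> act a b" for a b
  proof -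
    have "0 \<le> a"
    proof (cases "a = 0")
      case False then show ?thesis using assms(1) unfolding graded_monoid_ok_def
        using less_imp_le by blast
    qed simp
    then have "act 0 b \<le> act a b" using assms(5) unfolding monoid_action_def by blast
    moreover have "act 0 b = b" using assms(5) unfolding monoid_action_def by blast
    ultimately show ?thesis by simp
  qed
  have A: "comp Ng' c y = 0" if "y \<in> Ng b" "g c \<noteq> b" for y b c
  proof -
    have "\<exists>S f. finite S \<and> S \<subseteq> g -` {b} \<and> (\<forall>c\<in>S. f c \<in> Ng' c) \<and> y = sum f S"
      using that(1) unfolding g_Ng[of b] mem_Collect_eq .
    then obtain S f where Sf: "finite S" "S \<subseteq> g -` {b}" "\<forall>c\<in>S. f c \<in> Ng' c" "y = sum f S"
      by (elim exE conjE)
    have "comp Ng' c y = (\<Sum>c'\<in>S. comp Ng' c (f c'))" using Sf(4) comp_sum[OF dsN] by simp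
    also have "\<dots> = (\<Sum>c'\<in>S. 0)"
    proof (rule sum.cong[OF refl])
      fix c' assume "c' \<in> S"
      then have "c' \<noteq> c" "f c' \<in> Ng' c'" using Sf that(2) by auto
      then show "comp Ng' c (f c') = 0" using comp_hom[OF dsN] by simp
    qed
    finally show ?thesis by simp
  qed
  have xB: "comp Ng' c x = comp Ng' c (comp Ng (g c) x)" for c
  proof -
    let ?SB = "{b. comp Ng b x \<noteq> 0}"
    have fSB: "finite ?SB" using comp_props(1)[OF dsB] .
    have "comp Ng' c x = (\<Sum>b\<in>?SB. comp Ng' c (comp Ng b x))"
      by (subst comp_decomp[OF dsB, of x]) (simp add: comp_sum[OF dsN])
    also have "\<dots> = (\<Sum>b\<in>?SB. if b = g c then comp Ng' c (comp Ng b x) else 0)"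
    proof (rule sum.cong[OF refl])
      fix b show "comp Ng' c (comp Ng b x) = (if b = g c then comp Ng' c (comp Ng b x) else 0)"
      proof (cases "b = g c")
        case False then have "g c \<noteq> b" by simp
        from A[OF comp_props(2)[OF dsB] this] False show ?thesis by simp
      qed simp
    qed
    also have "\<dots> = comp Ng' c (comp Ng (g c) x)"
      by (simp add: sum.delta[OF fSB] comp_zero[OF dsN])
    finally show ?thesis .
  qed
  have xbM: "comp Ng b x \<in> M" for b
  proof -
    obtain S f where Sf: "finite S" "\<forall>b\<in>S. f b \<in> M \<inter> Ng b" "x = sum f S"
      using assms(13) xM unfolding graded_submodule_def by blast
    have "comp Ng b x = (\<Sum>b'\<in>S. comp Ng b (f b'))" using Sf(3) comp_sum[OF dsB] by simp
    also have "\<dots> = (\<Sum>b'\<in>S. if b = b' then f b' else 0)"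
    proof (rule sum.cong[OF refl])
      fix b' assume "b' \<in> S"
      then have "f b' \<in> Ng b'" using Sf(2) by blast
      from comp_hom[OF dsB this] show "comp Ng b (f b') = (if b = b' then f b' else 0)" .
    qed
    also have "\<dots> = (if b \<in> S then f b else 0)" using sum.delta'[OF Sf(1), of b f] by simp
    also have "\<dots> \<in> M"
    proof (cases "b \<in> S")
      case True then show ?thesis using Sf(2) by simp
    next
      case False
      have "0 \<in> M" using assms(12) unfolding is_submodule_def by (elim conjE)
      then show ?thesis using False by simp
    qed
    finally show ?thesis .
  qed
  define b0 where "b0 = g (gdeg Ng' x)"
  have "\<exists>b. b \<noteq> b0 \<and> comp Ng b x \<noteq> 0"
  proof (rule ccontr)
    assume "\<not> ?thesis"
    then have sub: "{b. comp Ng b x \<noteq> 0} \<subseteq> {b0}" by auto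
    have "x = (\<Sum>b\<in>{b. comp Ng b x \<noteq> 0}. comp Ng b x)" by (rule comp_decomp[OF dsB])
    also have "\<dots> = (\<Sum>b\<in>{b0}. comp Ng b x)"
      by (rule sum.mono_neutral_left) (use sub in auto)
    finally have xe: "x = comp Ng b0 x" by simp
    have "x \<in> Ng b0" using comp_props(2)[OF dsB, of b0 x] unfolding xe[symmetric] .
    then show False using nh unfolding homogeneous_def by blast
  qed
  then obtain b where bne: "b \<noteq> b0" and pne: "comp Ng b x \<noteq> 0" by blast
  define p where "p = comp Ng b x"
  have pM: "p \<in> M" unfolding p_def by (rule xbM)
  have p0: "p \<noteq> 0" using pne unfolding p_def .
  have pB: "p \<in> Ng b" unfolding p_def by (rule comp_props(2)[OF dsB])
  have K: "comp Ng' c p = (if g c = b then comp Ng' c x else 0)" for c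
  proof (cases "g c = b")
    case True then show ?thesis using xB[of c] unfolding p_def by simp
  next
    case False then show ?thesis using A[OF pB] by simp
  qed
  define c1 where "c1 = gdeg Ng' p"
  have lfp0: "lf Ng' p \<noteq> 0" using lf_props(1)[OF dsN p0] .
  have lfpc1: "comp Ng' c1 p = lf Ng' p" unfolding c1_def using lf_props(4)[OF dsN p0] .
  have lfpN: "lf Ng' p \<in> Ng' c1" unfolding c1_def using lf_props(2)[OF dsN p0] .
  have gc1: "g c1 = b" using K[of c1] lfpc1 lfp0 by (auto split: if_splits)
  have xc1: "comp Ng' c1 x = lf Ng' p" using K[of c1] lfpc1 gc1 by simp
  have "c1 \<le> gdeg Ng' x" using lf_props(3)[OF dsN x0] xc1 lfp0 by simp
  then have "g c1 \<le> b0" unfolding b0_def using g_mono by (simp add: monoD)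
  then have bb0: "b < b0" using gc1 bne by simp
  define W' where "W' c = Wset \<phi> Rg sm Ng' (X - {x}) c" for c
  define T where "T = {v. \<forall>c. g c < b0 \<longrightarrow> comp Ng' c v \<in> W' c}"
  have T0: "0 \<in> T" unfolding T_def W'_def by (simp add: comp_zero[OF dsN] W_0)
  have Tadd: "u + v \<in> T" if "u \<in> T" "v \<in> T" for u v
    using that unfolding T_def W'_def by (simp add: comp_add[OF dsN] W_add)
  have Tsm: "sm r v \<in> T" if vT: "v \<in> T" for r v
  proof -
    have "comp Ng' c (sm r v) \<in> W' c" if gc: "g c < b0" for c
    proof -
      let ?S = "{c'. comp Ng' c' v \<noteq> 0}"
      let ?SR = "{a. comp Rg a r \<noteq> 0}"
      have "sm r v = (\<Sum>c'\<in>?S. sm r (comp Ng' c' v))"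
        by (subst comp_decomp[OF dsN, of v]) (simp add: sm_sum_v)
      then have "comp Ng' c (sm r v) = (\<Sum>c'\<in>?S. comp Ng' c (sm r (comp Ng' c' v)))"
        by (simp add: comp_sum[OF dsN])
      also have "\<dots> = (\<Sum>c'\<in>?S. \<Sum>a\<in>?SR. (if act' a c' = c then sm (comp Rg a r) (comp Ng' c' v) else 0))"
        by (rule sum.cong[OF refl], rule comp_sm_hom, rule comp_props(2)[OF dsN])
      also have "\<dots> \<in> W' c" unfolding W'_def
      proof (rule W_sum, rule ballI, rule W_sum, rule ballI)
        fix c' a
        show "(if act' a c' = c then sm (comp Rg a r) (comp Ng' c' v) else 0) \<in> Wset \<phi> Rg sm Ng' (X - {x}) c"
        proof (cases "act' a c' = c")
          case True
          have "g c' \<le> g c" using True g_act[of a c'] act_ge[of "g c'" a] by simp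
          then have "g c' < b0" using gc by simp
          then have "comp Ng' c' v \<in> W' c'" using vT unfolding T_def by blast
          from W_sm[OF comp_props(2)[OF dsR, of a r] this[unfolded W'_def]] True
          show ?thesis by simp
        next
          case False then show ?thesis by (simp add: W_0)
        qed
      qed
      finally show ?thesis .
    qed
    then show ?thesis unfolding T_def by blast
  qed
  have subT: "is_submodule sm T" unfolding is_submodule_def using T0 Tadd Tsm by blast
  have genT: "lf Ng' y \<in> T" if yX: "y \<in> X" for y
  proof -
    have "comp Ng' c (lf Ng' y) \<in> W' c" if gc: "g c < b0" for c
    proof -
      let ?SR = "{a. comp Rg a (1::'r) \<noteq> 0}"
      define c0 where "c0 = gdeg Ng' y"
      have ly: "lf Ng' y \<in> Ng' c0" unfolding c0_def lf_def by (rule comp_props(2)[OF dsN])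
      have "comp Ng' c (lf Ng' y) = comp Ng' c (sm 1 (lf Ng' y))" by (simp add: sm_one)
      also have "\<dots> = (\<Sum>a\<in>?SR. (if act' a c0 = c then sm (comp Rg a 1) (lf Ng' y) else 0))"
        by (rule comp_sm_hom[OF ly])
      also have "\<dots> \<in> W' c" unfolding W'_def
      proof (rule W_sum, rule ballI)
        fix a
        show "(if act' a c0 = c then sm (comp Rg a 1) (lf Ng' y) else 0) \<in> Wset \<phi> Rg sm Ng' (X - {x}) c"
        proof (cases "act' a c0 = c")
          case True
          show ?thesis
          proof (cases "y = x")
            case True
            then have "g c0 = b0" unfolding c0_def b0_def by simp
            then have "b0 \<le> g c" using \<open>act' a c0 = c\<close> g_act[of a c0] act_ge[of b0 a] by simp
            then show ?thesis using gc by simp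
          next
            case False
            then have yX': "y \<in> X - {x}" using yX by simp
            have "sm (comp Rg a 1) (lf Ng' y) \<in> Ng' c"
              using gm_act[OF comp_props(2)[OF dsR, of a 1] ly] True by simp
            from W_gen[OF yX' comp_props(2)[OF dsR, of a 1] this] True show ?thesis by simp
          qed
        next
          case False then show ?thesis by (simp add: W_0)
        qed
      qed
      finally show ?thesis .
    qed
    then show ?thesis unfolding T_def by blast
  qed
  have "gen_submodule sm (lf Ng' ` X) \<subseteq> T"
    unfolding gen_submodule_def using subT genT by (intro Inter_lower) blast
  moreover have "lf Ng' p \<in> gen_submodule sm {lf Ng' p | p. p \<in> M \<and> p \<noteq> 0}"
    unfolding gen_submodule_def using pM p0 by blast
  ultimately have "lf Ng' p \<in> T" using gen_eq by blast
  then have "comp Ng' c1 (lf Ng' p) \<in> W' c1" using gc1 bb0 unfolding T_def by blast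
  moreover have "comp Ng' c1 (lf Ng' p) = lf Ng' p" using comp_hom[OF dsN lfpN] by simp
  ultimately have c1W: "comp Ng' c1 x \<in> W' c1" using xc1 by simp
  define Dset where "Dset = {c. comp Ng' c x \<noteq> 0 \<and> comp Ng' c x \<in> Wset \<phi> Rg sm Ng' (X - {x}) c}"
  have fD: "finite Dset"
    by (rule finite_subset[OF _ comp_props(1)[OF dsN, of x]]) (auto simp: Dset_def)
  have c1D: "c1 \<in> Dset" unfolding Dset_def using c1W xc1 lfp0 unfolding W'_def by simp
  define cm where "cm = Max Dset"
  have cmD: "cm \<in> Dset" unfolding cm_def using Max_in[OF fD] c1D by blast
  have cmmax: "\<forall>d\<in>Dset. d \<le> cm" unfolding cm_def using Max_ge[OF fD] by blast
  have "comp Ng' cm x \<in> Wset \<phi> Rg sm Ng' (X - {x}) cm" using cmD unfolding Dset_def by blast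
  from W_ps[OF this] obtain ps :: "('r \<times> 'n) list" where
    ps: "\<forall>(r, y) \<in> set ps. y \<in> X - {x} \<and> homogeneous Rg r \<and> sm r (lf Ng' y) \<in> Ng' cm"
        "comp Ng' cm x = sum_list (map (\<lambda>(r, y). sm r (lf Ng' y)) ps)" by blast
  have "reduces \<phi> Rg sm Ng' (X - {x}) x (x - sum_list (map (\<lambda>(r, y). sm r y) ps))"
    unfolding reduces_def Let_def Dset_def[symmetric]
    by (intro exI[of _ cm] conjI cmD cmmax exI[of _ ps] ps refl)
  then show False using red[OF xX] by blast
  qed
qed

end
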